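(* Let $N\ge 1$, $\alpha=(\alpha_1,\dots,\alpha_N)\in\mathbb R^N$, and let $\dot W$ be a real symmetric $N\times N$ matrix with $\dot W_{ij}\ge 0$ for $i\neq j$ and $\sum_{j=1}^N\dot W_{ij}=0$ for every $i$. Put $W_\varepsilon=\mathrm{Id}+\varepsilon\dot W$ and let $\mathcal P_\varepsilon$ be the operator defined in the context. Fix $k\in\mathbb Z$. (1) For every $\varepsilon>0$, the operator $\mathcal P_\varepsilon:L^2(M)\to L^2(M)$ has $N$ eigenvalues $\lambda^{(1)}_{k,\varepsilon},\dots,\lambda^{(N)}_{k,\varepsilon}$ (counted with algebraic multiplicity) with $N$ linearly independent (generalised) eigenfunctions $F^{(\ell)}_{k,\varepsilon}$ of the separable form $F^{(\ell)}_{k,\varepsilon}(j,x)=f^{(\ell)}_{k,\varepsilon}(j)\,e^{2\pi i k x}$, $\ell=1,\dots,N$, where $f^{(\ell)}_{k,\varepsilon}:\{1,\dots,N\}\to\mathbb C$. (2) For all sufficiently small $\varepsilon>0$, these eigenvalues can be labelled so that $$\bigl|\lambda^{(\ell)}_{k,\varepsilon}-e^{-2\pi i k\alpha_\ell}\bigr|\le 2\max_{1\le m\le N}|\dot W_{mm}|\,\varepsilon\qquad\text{for all }\ell\in\{1,\dots,N\}.$$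
   Context: $\mathbb S^1=\mathbb R/\mathbb Z$, $M=\{1,\dots,N\}\times\mathbb S^1$, equipped with the product $m$ of the uniform probability measure on $\{1,\dots,N\}$ and Lebesgue measure on $\mathbb S^1$; $L^2(M)$ is the complex Hilbert space $L^2(M,m)$. For $\varepsilon\ge 0$ the (noisy rotation) transfer operator is $(\mathcal P_\varepsilon F)(j,x)=\sum_{j'=1}^N (W_\varepsilon)_{jj'}\,F(j',x-\alpha_j)$ for $F\in L^2(M)$, $(j,x)\in M$. A generalised eigenfunction with eigenvalue $\lambda$ is a nonzero $F$ with $(\mathcal P_\varepsilon-\lambda)^nF=0$ for some $n\ge1$. *)

theory Defs
  imports "HOL-Analysis.Analysis"
begin

text \<open>Points of M = {1..N} x S^1 are pairs (j, x) with j in {1..N} and x in [0,1)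
  (representing R/Z).  Elements of L^2(M) are represented by functions
  F :: nat => real => complex (only the values on {1..N} x [0,1) matter),
  and equality in L^2(M) is equality almost everywhere.\<close>

definition L2_mem :: "nat \<Rightarrow> (nat \<Rightarrow> real \<Rightarrow> complex) \<Rightarrow> bool" where
  "L2_mem N F \<longleftrightarrow> (\<forall>j\<in>{1..N}.
      F j \<in> borel_measurable (lebesgue_on {0..<1}) \<and>
      integrable (lebesgue_on {0..<1}) (\<lambda>x. (cmod (F j x))\<^sup>2))"

definition L2_zero :: "nat \<Rightarrow> (nat \<Rightarrow> real \<Rightarrow> complex) \<Rightarrow> bool" where
  "L2_zero N F \<longleftrightarrow> (\<forall>j\<in>{1..N}. AE x in lebesgue_on {0..<1}. F j x = 0)"

definition transfer_op ::
  "nat \<Rightarrow> (nat \<Rightarrow> nat \<Rightarrow> real) \<Rightarrow> (nat \<Rightarrow> real) \<Rightarrow> (nat \<Rightarrow> real \<Rightarrow> complex) \<Rightarrow> (nat \<Rightarrow> real \<Rightarrow> complex)" where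
  "transfer_op N W \<alpha> F = (\<lambda>j x. \<Sum>j'=1..N. complex_of_real (W j j') * F j' (frac (x - \<alpha> j)))"

definition W_eps :: "(nat \<Rightarrow> nat \<Rightarrow> real) \<Rightarrow> real \<Rightarrow> nat \<Rightarrow> nat \<Rightarrow> real" where
  "W_eps Wd \<epsilon> = (\<lambda>i j. (if i = j then 1 else 0) + \<epsilon> * Wd i j)"

definition gen_eigenfunction ::
  "nat \<Rightarrow> (nat \<Rightarrow> nat \<Rightarrow> real) \<Rightarrow> (nat \<Rightarrow> real) \<Rightarrow> complex \<Rightarrow> (nat \<Rightarrow> real \<Rightarrow> complex) \<Rightarrow> bool" where
  "gen_eigenfunction N W \<alpha> lam F \<longleftrightarrow>
     L2_mem N F \<and> \<not> L2_zero N F \<and>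
     (\<exists>n\<ge>1. L2_zero N (((\<lambda>G j x. transfer_op N W \<alpha> G j x - lam * G j x) ^^ n) F))"

definition L2_lin_indep :: "nat \<Rightarrow> (nat \<Rightarrow> nat \<Rightarrow> real \<Rightarrow> complex) \<Rightarrow> bool" where
  "L2_lin_indep N Fs \<longleftrightarrow>
     (\<forall>c :: nat \<Rightarrow> complex. L2_zero N (\<lambda>j x. \<Sum>l=1..N. c l * Fs l j x) \<longrightarrow> (\<forall>l\<in>{1..N}. c l = 0))"

definition sep_fun :: "int \<Rightarrow> (nat \<Rightarrow> complex) \<Rightarrow> nat \<Rightarrow> real \<Rightarrow> complex" where
  "sep_fun k f = (\<lambda>j x. f j * exp (2 * of_real pi * \<i> * of_int k * of_real x))"

definition sep_eigen_system ::
  "nat \<Rightarrow> (nat \<Rightarrow> nat \<Rightarrow> real) \<Rightarrow> (nat \<Rightarrow> real) \<Rightarrow> int \<Rightarrow> (nat \<Rightarrow> complex) \<Rightarrow> (nat \<Rightarrow> nat \<Rightarrow> complex) \<Rightarrow> bool" where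
  "sep_eigen_system N W \<alpha> k lam f \<longleftrightarrow>
     L2_lin_indep N (\<lambda>l. sep_fun k (f l)) \<and>
     (\<forall>l\<in>{1..N}. gen_eigenfunction N W \<alpha> (lam l) (sep_fun k (f l)))"

end

theory Submission
  imports Defs "Jordan_Normal_Form.Jordan_Normal_Form_Existence"
begin


lemma jm_prop:
  "a < b \<Longrightarrow> b < sum_list (map fst n_as) \<Longrightarrow> jordan_matrix n_as $$ (a,b) \<noteq> 0
   \<Longrightarrow> jordan_matrix n_as $$ (a,a) = jordan_matrix n_as $$ (b,b)"
proof (induction n_as arbitrary: a b)
  case Nil
  then show ?case by simp
next
  case (Cons na n_as)
  obtain n x where na: "na = (n,x)" by force
  let ?s = "sum_list (map fst n_as)"
  have dims: "dim_row (jordan_block n x) = n" "dim_col (jordan_block n x) = n"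
    "dim_row (jordan_matrix n_as) = ?s" "dim_col (jordan_matrix n_as) = ?s" by auto
  have b: "b < n + ?s" using Cons.prems na by simp
  have a: "a < n + ?s" using Cons.prems b by simp
  note idx = index_mat_four_block(1)[of _ "jordan_block n x" "jordan_matrix n_as", unfolded dims]
  show ?case
  proof (cases "b < n")
    case True
    then show ?thesis using Cons.prems unfolding na jordan_matrix_Cons
      by (simp add: idx a b)
  next
    case False
    show ?thesis
    proof (cases "a < n")
      case True
      have "b - n < ?s" using b False by arith
      then show ?thesis using Cons.prems False True unfolding na jordan_matrix_Cons
        by (simp add: idx a b)
    next
      case False2: False
      have bs: "b - n < ?s" using b False by arith
      have "jordan_matrix n_as $$ (a-n,a-n) = jordan_matrix n_as $$ (b-n,b-n)"
        apply (rule Cons.IH)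
        using Cons.prems False False2 b bs unfolding na jordan_matrix_Cons
        by (auto simp add: idx a b)
      then show ?thesis using False False2 unfolding na jordan_matrix_Cons
        by (simp add: idx a b)
    qed
  qed
qed

lemma nilp_step:
  fixes T :: "complex mat"
  assumes T: "T \<in> carrier_mat n n" and ut: "upper_triangular T"
    and pr: "\<And>a b. a < b \<Longrightarrow> b < n \<Longrightarrow> T $$ (a,b) \<noteq> 0 \<Longrightarrow> T $$ (a,a) = T $$ (b,b)"
    and v: "v \<in> carrier_vec n"
    and hv: "\<forall>a<n. v $ a \<noteq> 0 \<longrightarrow> a + s \<le> i \<and> T $$ (a,a) = mu"
  shows "(T - mu \<cdot>\<^sub>m 1\<^sub>m n) *\<^sub>v v \<in> carrier_vec n \<and>
     (\<forall>a<n. ((T - mu \<cdot>\<^sub>m 1\<^sub>m n) *\<^sub>v v) $ a \<noteq> 0 \<longrightarrow> a + Suc s \<le> i \<and> T $$ (a,a) = mu)"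
proof (intro conjI allI impI)
  fix a
  show "(T - mu \<cdot>\<^sub>m 1\<^sub>m n) *\<^sub>v v \<in> carrier_vec n"
    using T v by (metis minus_carrier_mat smult_carrier_mat one_carrier_mat mult_mat_vec_carrier)
  assume a: "a < n" and nz: "((T - mu \<cdot>\<^sub>m 1\<^sub>m n) *\<^sub>v v) $ a \<noteq> 0"
  have "((T - mu \<cdot>\<^sub>m 1\<^sub>m n) *\<^sub>v v) $ a = (\<Sum>b<n. (T $$ (a,b) - (if a = b then mu else 0)) * v $ b)"
    using T v a by (auto simp: scalar_prod_def lessThan_atLeast0 intro!: sum.cong)
  with nz obtain b where b: "b < n" and nz2: "(T $$ (a,b) - (if a = b then mu else 0)) * v $ b \<noteq> 0"
    by (metis (no_types, lifting) lessThan_iff sum.neutral)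
  from nz2 have vb: "v $ b \<noteq> 0" by auto
  with hv b have hb: "b + s \<le> i" "T $$ (b,b) = mu" by auto
  have "a < b"
  proof (rule ccontr)
    assume "\<not> a < b"
    then consider "a = b" | "b < a" by linarith
    then show False
    proof cases
      case 1 then show ?thesis using nz2 hb by simp
    next
      case 2 then have "T $$ (a,b) = 0" using ut T a unfolding upper_triangular_def by auto
      then show ?thesis using nz2 2 by simp
    qed
  qed
  then have "T $$ (a,b) \<noteq> 0" using nz2 by simp
  with pr[OF \<open>a < b\<close> b] hb \<open>a < b\<close> show "a + Suc s \<le> i" "T $$ (a,a) = mu" by simp_all
qed

lemma nilp:
  fixes T :: "complex mat"
  assumes T: "T \<in> carrier_mat n n" and ut: "upper_triangular T"
    and pr: "\<And>a b. a < b \<Longrightarrow> b < n \<Longrightarrow> T $$ (a,b) \<noteq> 0 \<Longrightarrow> T $$ (a,a) = T $$ (b,b)"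
    and i: "i < n"
  shows "((\<lambda>v. (T - T $$ (i,i) \<cdot>\<^sub>m 1\<^sub>m n) *\<^sub>v v) ^^ n) (unit_vec n i) = 0\<^sub>v n"
proof -
  let ?f = "\<lambda>v. (T - T $$ (i,i) \<cdot>\<^sub>m 1\<^sub>m n) *\<^sub>v v"
  have H: "(?f ^^ s) (unit_vec n i) \<in> carrier_vec n \<and>
     (\<forall>a<n. (?f ^^ s) (unit_vec n i) $ a \<noteq> 0 \<longrightarrow> a + s \<le> i \<and> T $$ (a,a) = T $$ (i,i))" for s
  proof (induction s)
    case 0
    then show ?case using i by (auto simp: unit_vec_def)
  next
    case (Suc s)
    then show ?case using nilp_step[OF T ut pr, of "(?f ^^ s) (unit_vec n i)" s i "T $$ (i,i)"] by simp
  qed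
  show ?thesis
  proof (rule eq_vecI)
    show "dim_vec ((?f ^^ n) (unit_vec n i)) = dim_vec (0\<^sub>v n)" using H[of n] by auto
    fix a assume "a < dim_vec (0\<^sub>v n)"
    then have a: "a < n" by simp
    show "(?f ^^ n) (unit_vec n i) $ a = 0\<^sub>v n $ a"
      using H[of n] a i by fastforce
  qed
qed

lemma sim_step:
  fixes A :: "complex mat"
  assumes P: "P \<in> carrier_mat n n" and Q: "Q \<in> carrier_mat n n" and J: "J \<in> carrier_mat n n"
    and QP: "Q * P = 1\<^sub>m n" and A: "A = P * J * Q"
  shows "(A - lam \<cdot>\<^sub>m 1\<^sub>m n) * P = P * (J - lam \<cdot>\<^sub>m 1\<^sub>m n)"
proof -
  have AP: "A * P = P * J"
  proof -
    have "A * P = (P * J) * (Q * P)" unfolding A using P Q J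
      by (metis assoc_mult_mat mult_carrier_mat)
    also have "\<dots> = P * J" using QP P J by simp
    finally show ?thesis .
  qed
  have Ac: "A \<in> carrier_mat n n" using A P Q J by simp
  have e1: "(A - lam \<cdot>\<^sub>m 1\<^sub>m n) * P = A * P - (lam \<cdot>\<^sub>m 1\<^sub>m n) * P"
    using Ac P by (simp add: minus_mult_distrib_mat[of _ n n])
  have e2: "(lam \<cdot>\<^sub>m 1\<^sub>m n) * P = lam \<cdot>\<^sub>m P"
    using P by (simp add: mult_smult_assoc_mat[of _ n n])
  have e3: "P * (J - lam \<cdot>\<^sub>m 1\<^sub>m n) = P * J - P * (lam \<cdot>\<^sub>m 1\<^sub>m n)"
    using P J by (simp add: mult_minus_distrib_mat[of _ n n])
  have e4: "P * (lam \<cdot>\<^sub>m 1\<^sub>m n) = lam \<cdot>\<^sub>m P"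
    using P mult_smult_distrib[OF P one_carrier_mat[of n], of lam] by simp
  show ?thesis using AP e1 e2 e3 e4 by simp
qed

lemma sim_iter:
  fixes A :: "complex mat"
  assumes P: "P \<in> carrier_mat n n" and Q: "Q \<in> carrier_mat n n" and J: "J \<in> carrier_mat n n"
    and QP: "Q * P = 1\<^sub>m n" and A: "A = P * J * Q" and w: "w \<in> carrier_vec n"
  shows "((\<lambda>v. (A - lam \<cdot>\<^sub>m 1\<^sub>m n) *\<^sub>v v) ^^ m) (P *\<^sub>v w)
       = P *\<^sub>v (((\<lambda>v. (J - lam \<cdot>\<^sub>m 1\<^sub>m n) *\<^sub>v v) ^^ m) w)
     \<and> ((\<lambda>v. (J - lam \<cdot>\<^sub>m 1\<^sub>m n) *\<^sub>v v) ^^ m) w \<in> carrier_vec n"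
proof (induction m)
  case 0
  then show ?case using w by simp
next
  case (Suc m)
  let ?u = "((\<lambda>v. (J - lam \<cdot>\<^sub>m 1\<^sub>m n) *\<^sub>v v) ^^ m) w"
  have u: "?u \<in> carrier_vec n" using Suc by simp
  have Ac: "A \<in> carrier_mat n n" using A P Q J by simp
  have "(A - lam \<cdot>\<^sub>m 1\<^sub>m n) *\<^sub>v (P *\<^sub>v ?u) = ((A - lam \<cdot>\<^sub>m 1\<^sub>m n) * P) *\<^sub>v ?u"
    using Ac P u by (metis assoc_mult_mat_vec minus_carrier_mat one_carrier_mat smult_carrier_mat)
  also have "\<dots> = (P * (J - lam \<cdot>\<^sub>m 1\<^sub>m n)) *\<^sub>v ?u" using sim_step[OF P Q J QP A] by simp
  also have "\<dots> = P *\<^sub>v ((J - lam \<cdot>\<^sub>m 1\<^sub>m n) *\<^sub>v ?u)"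
    using J P u by (metis assoc_mult_mat_vec minus_carrier_mat one_carrier_mat smult_carrier_mat)
  moreover have "(J - lam \<cdot>\<^sub>m 1\<^sub>m n) *\<^sub>v ?u \<in> carrier_vec n"
    using J u by (metis mult_mat_vec_carrier minus_carrier_mat one_carrier_mat smult_carrier_mat)
  ultimately show ?case using Suc by simp
qed

lemma prod_list_upt: "prod_list (map f [0..<n]) = (\<Prod>i<n. f i)"
  by (induct n) (auto simp: mult.commute)

lemma col_unit: fixes P :: "complex mat" assumes P: "P \<in> carrier_mat n n" and i: "i < n"
  shows "col P i = P *\<^sub>v unit_vec n i"
proof -
  have "col (P * 1\<^sub>m n) i = P *\<^sub>v col (1\<^sub>m n) i" using P i by (intro col_mult2) auto
  moreover have "P * 1\<^sub>m n = P" using P by (rule right_mult_one_mat)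
  ultimately show ?thesis using i by simp
qed

lemma jordan_data:
  fixes A :: "complex mat"
  assumes A: "A \<in> carrier_mat n n"
  shows "\<exists>P Q (mu::nat \<Rightarrow> complex). P \<in> carrier_mat n n \<and> Q \<in> carrier_mat n n \<and> P * Q = 1\<^sub>m n \<and> Q * P = 1\<^sub>m n \<and>
     (\<forall>i<n. ((\<lambda>v. (A - mu i \<cdot>\<^sub>m 1\<^sub>m n) *\<^sub>v v) ^^ n) (col P i) = 0\<^sub>v n) \<and>
     (\<forall>z. poly (char_poly A) z = (\<Prod>i<n. z - mu i))"
proof -
  obtain as where "char_poly A = (\<Prod>a\<leftarrow>as. [:- a, 1:])" using char_poly_factorized[OF A] by blast
  from jordan_nf_exists[OF A this] obtain n_as where jnf: "jordan_nf A n_as" by blast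
  let ?J = "jordan_matrix n_as"
  from jnf have sim: "similar_mat A ?J" unfolding jordan_nf_def by simp
  then obtain P Q where wit: "similar_mat_wit A ?J P Q" unfolding similar_mat_def by blast
  have dA: "dim_row A = n" using A by simp
  from wit have P: "P \<in> carrier_mat n n" and Q: "Q \<in> carrier_mat n n" and J: "?J \<in> carrier_mat n n"
    and PQ: "P * Q = 1\<^sub>m n" and QP: "Q * P = 1\<^sub>m n" and AJ: "A = P * ?J * Q"
    unfolding similar_mat_wit_def Let_def dA by auto
  have sn: "sum_list (map fst n_as) = n" using J jordan_matrix_dim(1)[of n_as] by (metis carrier_matD(1))
  have ut: "upper_triangular ?J" unfolding upper_triangular_def
    using jordan_matrix_upper_triangular by auto
  have pr: "\<And>a b. a < b \<Longrightarrow> b < n \<Longrightarrow> ?J $$ (a,b) \<noteq> 0 \<Longrightarrow> ?J $$ (a,a) = ?J $$ (b,b)"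
    using jm_prop sn by metis
  define mu where "mu i = ?J $$ (i,i)" for i
  have gen: "\<forall>i<n. ((\<lambda>v. (A - mu i \<cdot>\<^sub>m 1\<^sub>m n) *\<^sub>v v) ^^ n) (col P i) = 0\<^sub>v n"
  proof (intro allI impI)
    fix i assume i: "i < n"
    have "((\<lambda>v. (A - mu i \<cdot>\<^sub>m 1\<^sub>m n) *\<^sub>v v) ^^ n) (col P i)
        = P *\<^sub>v (((\<lambda>v. (?J - mu i \<cdot>\<^sub>m 1\<^sub>m n) *\<^sub>v v) ^^ n) (unit_vec n i))"
      using sim_iter[OF P Q J QP AJ unit_vec_carrier[of n i], where lam="mu i" and m=n] col_unit[OF P i] by simp
    also have "\<dots> = P *\<^sub>v 0\<^sub>v n" using nilp[OF J ut pr i] unfolding mu_def by simp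
    also have "\<dots> = 0\<^sub>v n" using P by (intro eq_vecI) (auto simp: scalar_prod_def)
    finally show "((\<lambda>v. (A - mu i \<cdot>\<^sub>m 1\<^sub>m n) *\<^sub>v v) ^^ n) (col P i) = 0\<^sub>v n" .
  qed
  have cp: "poly (char_poly A) z = (\<Prod>i<n. z - mu i)" for z
  proof -
    have "char_poly A = char_poly ?J" by (rule char_poly_similar[OF sim])
    also have "\<dots> = (\<Prod>a\<leftarrow>diag_mat ?J. [:- a, 1:])" by (rule char_poly_upper_triangular[OF J ut])
    finally have "poly (char_poly A) z = (\<Prod>a\<leftarrow>diag_mat ?J. poly [:- a, 1:] z)"
      by (simp add: poly_prod_list o_def)
    also have "\<dots> = (\<Prod>i<n. z - mu i)"
      unfolding diag_mat_def using sn by (simp add: mu_def prod_list_upt o_def)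
    finally show ?thesis .
  qed
  show ?thesis using P Q PQ QP gen cp by blast
qed



lemma not_AE_false: "\<not> (AE x in lebesgue_on {0..<1::real}. False)"
proof
  assume "AE x in lebesgue_on {0..<1::real}. False"
  then obtain Z where Z: "Z \<in> null_sets (lebesgue_on {0..<1::real})" "{0..<1::real} \<subseteq> Z"
    unfolding eventually_ae_filter space_lebesgue_on by (auto simp: atLeastLessThan_def atLeast_def lessThan_def)
  have "emeasure (lebesgue_on {0..<1::real}) {0..<1} \<le> emeasure (lebesgue_on {0..<1::real}) Z"
    using Z by (intro emeasure_mono) auto
  also have "\<dots> = 0" using Z by auto
  finally have "emeasure (lebesgue_on {0..<1::real}) {0..<1} = 0" by simp
  moreover have "emeasure (lebesgue_on {0..<1::real}) {0..<1} = emeasure lebesgue {0..<1::real}"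
    by (rule emeasure_restrict_space) auto
  moreover have "emeasure lebesgue {0..<1::real} = emeasure lborel {0..<1::real}"
    by (simp add: emeasure_completion)
  moreover have "emeasure lborel {0..<1::real} = 1" by (simp add: emeasure_lborel_Ico)
  ultimately show False by simp
qed

definition ex :: "int \<Rightarrow> real \<Rightarrow> complex" where
  "ex k x = exp (2 * of_real pi * \<i> * of_int k * of_real x)"

definition dd :: "int \<Rightarrow> (nat \<Rightarrow> real) \<Rightarrow> nat \<Rightarrow> complex" where
  "dd k \<alpha> l = exp (- 2 * of_real pi * \<i> * of_int k * of_real (\<alpha> l))"

lemma sep_fun_ex: "sep_fun k f j x = f j * ex k x"
  unfolding sep_fun_def ex_def by simp

lemma ex_nonzero: "ex k x \<noteq> 0" unfolding ex_def by simp

lemma norm_ex: "cmod (ex k x) = 1"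
proof -
  have "2 * of_real pi * \<i> * of_int k * of_real x = \<i> * complex_of_real (2 * pi * k * x)" by simp
  then show ?thesis unfolding ex_def by (simp only: norm_exp_i_times)
qed

lemma norm_dd: "cmod (dd k \<alpha> l) = 1"
proof -
  have "- 2 * of_real pi * \<i> * of_int k * of_real (\<alpha> l) = \<i> * complex_of_real (- 2 * pi * k * \<alpha> l)" by simp
  then show ?thesis unfolding dd_def by (simp only: norm_exp_i_times)
qed

lemma ex_frac: "ex k (frac y) = ex k y"
proof -
  have "2 * of_real pi * \<i> * of_int k * of_real (frac y)
      = 2 * of_real pi * \<i> * of_int k * of_real y - \<i> * (of_int (k * \<lfloor>y\<rfloor>) * (of_real pi * 2))"
    unfolding frac_def by (simp add: algebra_simps)
  moreover have e: "exp (\<i> * (of_int (k * \<lfloor>y\<rfloor>) * (of_real pi * 2))) = 1" by (rule exp_2pi_1_int)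
  ultimately show ?thesis unfolding ex_def by (simp only: exp_diff e) simp
qed

lemma ex_shift: "ex k (x - a) = ex k x * exp (- 2 * of_real pi * \<i> * of_int k * of_real a)"
proof -
  have "2 * of_real pi * \<i> * of_int k * of_real (x - a)
      = 2 * of_real pi * \<i> * of_int k * of_real x + (- 2 * of_real pi * \<i> * of_int k * of_real a)"
    by (simp add: algebra_simps)
  then show ?thesis unfolding ex_def by (simp only: exp_add)
qed

lemma ex_fs: "ex k (frac (x - \<alpha> j)) = ex k x * dd k \<alpha> j"
  unfolding ex_frac ex_shift dd_def ..

lemma transfer_sep:
  "transfer_op N W \<alpha> (sep_fun k g) j x = ex k x * (dd k \<alpha> j * (\<Sum>j'=1..N. of_real (W j j') * g j'))"
  unfolding transfer_op_def sep_fun_ex ex_fs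
  by (simp add: sum_distrib_left mult_ac)

definition Lf :: "nat \<Rightarrow> (nat \<Rightarrow> nat \<Rightarrow> real) \<Rightarrow> (nat \<Rightarrow> real) \<Rightarrow> int \<Rightarrow> complex \<Rightarrow> (nat \<Rightarrow> complex) \<Rightarrow> nat \<Rightarrow> complex" where
  "Lf N W \<alpha> k lam g = (\<lambda>j. dd k \<alpha> j * (\<Sum>j'=1..N. of_real (W j j') * g j') - lam * g j)"

lemma iter_sep:
  "((\<lambda>G j x. transfer_op N W \<alpha> G j x - lam * G j x) ^^ n) (sep_fun k g)
   = sep_fun k ((Lf N W \<alpha> k lam ^^ n) g)"
proof (induction n)
  case 0
  then show ?case by simp
next
  case (Suc n)
  show ?case
    by (simp add: Suc, rule ext, rule ext, simp add: transfer_sep sep_fun_ex Lf_def algebra_simps)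
qed

lemma sum_shift1: "(\<Sum>j=1..N. f j) = (\<Sum>b<N. f (Suc b))"
  by (induct N) (auto simp: sum.atLeast1_atMost_eq)



definition Amat :: "nat \<Rightarrow> (nat \<Rightarrow> nat \<Rightarrow> real) \<Rightarrow> (nat \<Rightarrow> real) \<Rightarrow> int \<Rightarrow> complex mat" where
  "Amat N W \<alpha> k = mat N N (\<lambda>(a,b). dd k \<alpha> (Suc a) * of_real (W (Suc a) (Suc b)))"

definition fun_of :: "complex vec \<Rightarrow> nat \<Rightarrow> complex" where
  "fun_of v = (\<lambda>j. v $ (j - 1))"

lemma Amat_carrier: "Amat N W \<alpha> k \<in> carrier_mat N N" unfolding Amat_def by simp

lemma Lf_vec:
  assumes v: "v \<in> carrier_vec N" and gv: "\<forall>j\<in>{1..N}. g j = fun_of v j" and j: "j \<in> {1..N}"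
  shows "Lf N W \<alpha> k lam g j = fun_of ((Amat N W \<alpha> k - lam \<cdot>\<^sub>m 1\<^sub>m N) *\<^sub>v v) j"
proof -
  obtain a where ja: "j = Suc a" and a: "a < N" using j by (cases j) auto
  have "fun_of ((Amat N W \<alpha> k - lam \<cdot>\<^sub>m 1\<^sub>m N) *\<^sub>v v) j
      = (\<Sum>b<N. (dd k \<alpha> (Suc a) * of_real (W (Suc a) (Suc b)) - lam * (if a = b then 1 else 0)) * v $ b)"
    unfolding fun_of_def ja using a v
    by (auto simp: Amat_def scalar_prod_def lessThan_atLeast0 intro!: sum.cong)
  also have "\<dots> = dd k \<alpha> (Suc a) * (\<Sum>b<N. of_real (W (Suc a) (Suc b)) * v $ b) - lam * v $ a"
  proof -
    have "(\<Sum>b<N. (dd k \<alpha> (Suc a) * of_real (W (Suc a) (Suc b)) - lam * (if a = b then 1 else 0)) * v $ b)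
      = (\<Sum>b<N. dd k \<alpha> (Suc a) * (of_real (W (Suc a) (Suc b)) * v $ b) - (if b = a then lam * v $ a else 0))"
      by (rule sum.cong) (auto simp: algebra_simps)
    also have "\<dots> = dd k \<alpha> (Suc a) * (\<Sum>b<N. of_real (W (Suc a) (Suc b)) * v $ b) - lam * v $ a"
      using a by (simp add: sum_subtractf sum_distrib_left)
    finally show ?thesis .
  qed
  also have "\<dots> = Lf N W \<alpha> k lam g j"
    unfolding Lf_def sum_shift1 ja using gv a by (simp add: fun_of_def)
  finally show ?thesis by simp
qed

lemma iter_vec_carrier:
  fixes B :: "complex mat"
  assumes "B \<in> carrier_mat N N" "v \<in> carrier_vec N"
  shows "((\<lambda>v. B *\<^sub>v v) ^^ n) v \<in> carrier_vec N"
  using assms by (induct n) auto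

lemma iter_vec:
  assumes v: "v \<in> carrier_vec N" and gv: "\<forall>j\<in>{1..N}. g j = fun_of v j"
  shows "\<forall>j\<in>{1..N}. (Lf N W \<alpha> k lam ^^ n) g j
     = fun_of (((\<lambda>v. (Amat N W \<alpha> k - lam \<cdot>\<^sub>m 1\<^sub>m N) *\<^sub>v v) ^^ n) v) j"
proof (induction n)
  case 0
  then show ?case using gv by simp
next
  case (Suc n)
  have c: "((\<lambda>v. (Amat N W \<alpha> k - lam \<cdot>\<^sub>m 1\<^sub>m N) *\<^sub>v v) ^^ n) v \<in> carrier_vec N"
    by (rule iter_vec_carrier) (use v Amat_carrier in auto)
  show ?case using Lf_vec[OF c Suc.IH] by simp
qed

lemma L2_mem_sep: "L2_mem N (sep_fun k f)"
  unfolding L2_mem_def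
proof (intro ballI conjI)
  fix j
  have "continuous_on {0..<1} (\<lambda>x. sep_fun k f j x)"
    unfolding sep_fun_def by (intro continuous_intros)
  then show "sep_fun k f j \<in> borel_measurable (lebesgue_on {0..<1})"
    by (intro continuous_imp_measurable_on_sets_lebesgue) auto
  have e: "(\<lambda>x. (cmod (sep_fun k f j x))\<^sup>2) = (\<lambda>x. (cmod (f j))\<^sup>2)"
    by (rule ext) (simp add: sep_fun_ex norm_mult norm_ex)
  have "finite_measure (lebesgue_on {0..<1::real})"
    by (rule finite_measure_lebesgue_on) (auto intro!: fmeasurableI simp: emeasure_completion emeasure_lborel_Ico)
  then show "integrable (lebesgue_on {0..<1}) (\<lambda>x. (cmod (sep_fun k f j x))\<^sup>2)"
    unfolding e by (rule finite_measure.integrable_const)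
qed

lemma AE_const_zero:
  assumes "AE x in lebesgue_on {0..<1}. c * ex k x = 0"
  shows "c = 0"
proof (rule ccontr)
  assume "c \<noteq> 0"
  then have "AE x in lebesgue_on {0..<1::real}. False"
    using assms by (rule_tac eventually_mono) (auto simp: ex_nonzero)
  then show False using not_AE_false by simp
qed

lemma vec_nonzero_ex:
  fixes v :: "'a::zero vec"
  assumes "v \<in> carrier_vec N" "v \<noteq> 0\<^sub>v N"
  shows "\<exists>a<N. v $ a \<noteq> 0"
proof (rule ccontr)
  assume "\<not> (\<exists>a<N. v $ a \<noteq> 0)"
  then have "v = 0\<^sub>v N" using assms by (intro eq_vecI) auto
  then show False using assms by simp
qed

lemma gen_ef:
  assumes N1: "N \<ge> 1" and v: "v \<in> carrier_vec N" and v0: "v \<noteq> 0\<^sub>v N"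
    and z: "((\<lambda>v. (Amat N W \<alpha> k - lam \<cdot>\<^sub>m 1\<^sub>m N) *\<^sub>v v) ^^ N) v = 0\<^sub>v N"
  shows "gen_eigenfunction N W \<alpha> lam (sep_fun k (fun_of v))"
  unfolding gen_eigenfunction_def
proof (intro conjI)
  show "L2_mem N (sep_fun k (fun_of v))" by (rule L2_mem_sep)
  obtain a where a: "a < N" "v $ a \<noteq> 0" using vec_nonzero_ex[OF v v0] by blast
  show "\<not> L2_zero N (sep_fun k (fun_of v))"
  proof
    assume "L2_zero N (sep_fun k (fun_of v))"
    then have "AE x in lebesgue_on {0..<1}. sep_fun k (fun_of v) (Suc a) x = 0"
      unfolding L2_zero_def using a by auto
    then have "AE x in lebesgue_on {0..<1}. v $ a * ex k x = 0"
      by (simp add: sep_fun_ex fun_of_def)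
    then show False using AE_const_zero a by blast
  qed
  have it: "\<forall>j\<in>{1..N}. (Lf N W \<alpha> k lam ^^ N) (fun_of v) j = 0"
    using iter_vec[OF v, where g="fun_of v" and n=N and lam=lam and W=W and \<alpha>=\<alpha> and k=k] z by (auto simp: fun_of_def)
  show "\<exists>n\<ge>1. L2_zero N (((\<lambda>G j x. transfer_op N W \<alpha> G j x - lam * G j x) ^^ n) (sep_fun k (fun_of v)))"
    by (rule exI[of _ N]) (use N1 it in \<open>auto simp: iter_sep L2_zero_def sep_fun_ex\<close>)
qed

lemma lin_indep:
  assumes P: "P \<in> carrier_mat N N" and Q: "Q \<in> carrier_mat N N" and QP: "Q * P = 1\<^sub>m N"
    and g: "bij_betw g {1..N} {0..<N}"
  shows "L2_lin_indep N (\<lambda>l. sep_fun k (fun_of (col P (g l))))"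
  unfolding L2_lin_indep_def
proof (intro allI impI ballI)
  fix c :: "nat \<Rightarrow> complex" and l
  assume z: "L2_zero N (\<lambda>j x. \<Sum>l = 1..N. c l * sep_fun k (fun_of (col P (g l))) j x)"
  assume l: "l \<in> {1..N}"
  define h where "h = inv_into {1..N} g"
  define w where "w = vec N (\<lambda>i. c (h i))"
  have w: "w \<in> carrier_vec N" unfolding w_def by simp
  have Pw: "P *\<^sub>v w = 0\<^sub>v N"
  proof (rule eq_vecI)
    show "dim_vec (P *\<^sub>v w) = dim_vec (0\<^sub>v N)" using P by simp
    fix a assume "a < dim_vec (0\<^sub>v N)"
    then have a: "a < N" by simp
    have "AE x in lebesgue_on {0..<1}. (\<Sum>l = 1..N. c l * sep_fun k (fun_of (col P (g l))) (Suc a) x) = 0"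
      using z a unfolding L2_zero_def by auto
    then have "AE x in lebesgue_on {0..<1}. (\<Sum>l = 1..N. c l * P $$ (a, g l)) * ex k x = 0"
    proof (rule eventually_mono)
      fix x assume "(\<Sum>l = 1..N. c l * sep_fun k (fun_of (col P (g l))) (Suc a) x) = 0"
      moreover have "(\<Sum>l = 1..N. c l * sep_fun k (fun_of (col P (g l))) (Suc a) x)
          = (\<Sum>l = 1..N. c l * P $$ (a, g l)) * ex k x"
        unfolding sum_distrib_right
      proof (rule sum.cong)
        fix l assume "l \<in> {1..N}"
        then have "g l < N" using g unfolding bij_betw_def by auto
        then show "c l * sep_fun k (fun_of (col P (g l))) (Suc a) x = c l * P $$ (a, g l) * ex k x"
          using a P by (simp add: sep_fun_ex fun_of_def)
      qed simp
      ultimately show "(\<Sum>l = 1..N. c l * P $$ (a, g l)) * ex k x = 0" by simp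
    qed
    then have s0: "(\<Sum>l = 1..N. c l * P $$ (a, g l)) = 0" by (rule AE_const_zero)
    have "(P *\<^sub>v w) $ a = (\<Sum>i\<in>{0..<N}. P $$ (a, i) * c (h i))"
      using a P w by (simp add: scalar_prod_def w_def)
    also have "\<dots> = (\<Sum>l\<in>{1..N}. P $$ (a, g l) * c (h (g l)))"
      using sum.reindex_bij_betw[OF g, of "\<lambda>i. P $$ (a, i) * c (h i)"] by simp
    also have "\<dots> = (\<Sum>l\<in>{1..N}. c l * P $$ (a, g l))"
      by (rule sum.cong) (use g in \<open>auto simp: h_def bij_betw_def inv_into_f_f\<close>)
    finally show "(P *\<^sub>v w) $ a = 0\<^sub>v N $ a" using s0 a by simp
  qed
  have "w = (Q * P) *\<^sub>v w" using QP w by simp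
  also have "\<dots> = Q *\<^sub>v (P *\<^sub>v w)" using Q P w by simp
  also have "\<dots> = 0\<^sub>v N" unfolding Pw using Q by (intro eq_vecI) (auto simp: scalar_prod_def)
  finally have w0: "w = 0\<^sub>v N" .
  have gl: "g l < N" using g l unfolding bij_betw_def by auto
  have "h (g l) = l" using g l by (auto simp: h_def bij_betw_def inv_into_f_f)
  then have "c l = w $ (g l)" using gl by (simp add: w_def)
  then show "c l = 0" using w0 gl by simp
qed

lemma col_nonzero:
  fixes P :: "complex mat"
  assumes P: "P \<in> carrier_mat N N" and Q: "Q \<in> carrier_mat N N" and QP: "Q * P = 1\<^sub>m N"
    and i: "i < N"
  shows "col P i \<noteq> 0\<^sub>v N"
proof
  assume c0: "col P i = 0\<^sub>v N"
  have "unit_vec N i = col (Q * P) i" using QP i by simp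
  also have "\<dots> = Q *\<^sub>v col P i" using Q P i by (intro col_mult2) auto
  also have "\<dots> = 0\<^sub>v N" unfolding c0 using Q by (intro eq_vecI) (auto simp: scalar_prod_def)
  finally have e: "unit_vec N i = (0\<^sub>v N :: complex vec)" .
  have "(unit_vec N i :: complex vec) $ i = 1" using i by simp
  moreover have "(0\<^sub>v N :: complex vec) $ i = 0" using i by simp
  ultimately show False using e by simp
qed

lemma eigen_system:
  assumes N1: "N \<ge> 1" and P: "P \<in> carrier_mat N N" and Q: "Q \<in> carrier_mat N N" and QP: "Q * P = 1\<^sub>m N"
    and gen: "\<forall>i<N. ((\<lambda>v. (Amat N W \<alpha> k - mu i \<cdot>\<^sub>m 1\<^sub>m N) *\<^sub>v v) ^^ N) (col P i) = 0\<^sub>v N"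
    and g: "bij_betw g {1..N} {0..<N}"
  shows "sep_eigen_system N W \<alpha> k (\<lambda>l. mu (g l)) (\<lambda>l. fun_of (col P (g l)))"
  unfolding sep_eigen_system_def
proof (intro conjI ballI)
  show "L2_lin_indep N (\<lambda>l. sep_fun k (fun_of (col P (g l))))" by (rule lin_indep[OF P Q QP g])
  fix l assume l: "l \<in> {1..N}"
  have gl: "g l < N" using g l unfolding bij_betw_def by auto
  show "gen_eigenfunction N W \<alpha> (mu (g l)) (sep_fun k (fun_of (col P (g l))))"
    by (rule gen_ef[OF N1]) (use P gl col_nonzero[OF P Q QP gl] gen in auto)
qed



lemma rowabs:
  fixes Wd :: "nat \<Rightarrow> nat \<Rightarrow> real"
  assumes i: "i \<in> {1..N}" and off: "\<forall>j\<in>{1..N}. i \<noteq> j \<longrightarrow> Wd i j \<ge> 0"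
    and rs: "(\<Sum>j=1..N. Wd i j) = 0"
  shows "(\<Sum>j=1..N. \<bar>Wd i j\<bar>) = 2 * \<bar>Wd i i\<bar>"
proof -
  have f: "finite {1..N}" by simp
  have s1: "(\<Sum>j=1..N. Wd i j) = Wd i i + (\<Sum>j\<in>{1..N} - {i}. Wd i j)"
    using sum.remove[OF f i] by simp
  have s2: "(\<Sum>j=1..N. \<bar>Wd i j\<bar>) = \<bar>Wd i i\<bar> + (\<Sum>j\<in>{1..N} - {i}. \<bar>Wd i j\<bar>)"
    using sum.remove[OF f i] by simp
  have s3: "(\<Sum>j\<in>{1..N} - {i}. \<bar>Wd i j\<bar>) = (\<Sum>j\<in>{1..N} - {i}. Wd i j)"
    using off by (intro sum.cong) auto
  have nn: "(\<Sum>j\<in>{1..N} - {i}. Wd i j) \<ge> 0" using off by (intro sum_nonneg) auto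
  then have "Wd i i \<le> 0" using s1 rs by linarith
  then show ?thesis using s1 s2 s3 rs by linarith
qed

lemma gersh:
  fixes Wd :: "nat \<Rightarrow> nat \<Rightarrow> real"
  assumes off: "\<forall>i\<in>{1..N}. \<forall>j\<in>{1..N}. i \<noteq> j \<longrightarrow> Wd i j \<ge> 0"
    and rs: "\<forall>i\<in>{1..N}. (\<Sum>j=1..N. Wd i j) = 0"
    and eps: "\<epsilon> \<ge> 0"
    and ev: "eigenvalue (Amat N (W_eps Wd \<epsilon>) \<alpha> k) mu"
  shows "\<exists>l\<in>{1..N}. cmod (mu - dd k \<alpha> l) \<le> 2 * \<epsilon> * \<bar>Wd l l\<bar>"
proof -
  let ?A = "Amat N (W_eps Wd \<epsilon>) \<alpha> k"
  obtain v where v: "v \<in> carrier_vec N" "v \<noteq> 0\<^sub>v N" and Av: "?A *\<^sub>v v = mu \<cdot>\<^sub>v v"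
    using ev unfolding eigenvalue_def eigenvector_def using Amat_carrier[of N "W_eps Wd \<epsilon>" \<alpha> k] by auto
  obtain b0 where b0: "b0 < N" "v $ b0 \<noteq> 0" using vec_nonzero_ex[OF v] by blast
  let ?S = "(\<lambda>b. cmod (v $ b)) ` {0..<N}"
  have fS: "finite ?S" "?S \<noteq> {}" using b0 by auto
  obtain a where a: "a < N" "cmod (v $ a) = Max ?S" using Max_in[OF fS] by auto
  have amax: "\<And>b. b < N \<Longrightarrow> cmod (v $ b) \<le> cmod (v $ a)" using a fS by auto
  have vapos: "cmod (v $ a) > 0" using amax[OF b0(1)] b0(2) by (smt (verit) norm_le_zero_iff)
  let ?d = "dd k \<alpha> (Suc a)"
  let ?s = "(\<Sum>b<N. of_real (Wd (Suc a) (Suc b)) * v $ b)"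
  have "(?A *\<^sub>v v) $ a = (\<Sum>b<N. ?d * of_real (W_eps Wd \<epsilon> (Suc a) (Suc b)) * v $ b)"
    using a v by (auto simp: Amat_def scalar_prod_def lessThan_atLeast0 intro!: sum.cong)
  also have "\<dots> = (\<Sum>b<N. (if b = a then ?d * v $ a else 0) + ?d * of_real \<epsilon> * (of_real (Wd (Suc a) (Suc b)) * v $ b))"
    by (rule sum.cong) (auto simp: W_eps_def algebra_simps)
  also have "\<dots> = ?d * v $ a + ?d * of_real \<epsilon> * ?s"
    using a by (simp add: sum.distrib sum_distrib_left)
  finally have row: "(?A *\<^sub>v v) $ a = ?d * v $ a + ?d * of_real \<epsilon> * ?s" .
  have "(?A *\<^sub>v v) $ a = mu * v $ a" using Av a v by simp
  with row have eq: "(mu - ?d) * v $ a = ?d * of_real \<epsilon> * ?s" by (simp add: algebra_simps)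
  have "cmod ?s \<le> (\<Sum>b<N. \<bar>Wd (Suc a) (Suc b)\<bar> * cmod (v $ b))"
    by (rule order_trans[OF norm_sum]) (simp add: norm_mult)
  also have "\<dots> \<le> (\<Sum>b<N. \<bar>Wd (Suc a) (Suc b)\<bar> * cmod (v $ a))"
    by (rule sum_mono) (use amax in \<open>auto intro: mult_left_mono\<close>)
  also have "\<dots> = (\<Sum>j=1..N. \<bar>Wd (Suc a) j\<bar>) * cmod (v $ a)"
    by (simp only: sum_shift1 sum_distrib_right)
  also have "(\<Sum>j=1..N. \<bar>Wd (Suc a) j\<bar>) = 2 * \<bar>Wd (Suc a) (Suc a)\<bar>"
    using rowabs[of "Suc a" N Wd] off rs a by auto
  finally have sb: "cmod ?s \<le> 2 * \<bar>Wd (Suc a) (Suc a)\<bar> * cmod (v $ a)" .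
  have "cmod (mu - ?d) * cmod (v $ a) = \<epsilon> * cmod ?s"
    using arg_cong[OF eq, of cmod] eps by (simp add: norm_mult norm_dd)
  also have "\<dots> \<le> \<epsilon> * (2 * \<bar>Wd (Suc a) (Suc a)\<bar> * cmod (v $ a))"
    using sb eps by (rule_tac mult_left_mono) auto
  finally have "cmod (mu - ?d) * cmod (v $ a) \<le> (2 * \<epsilon> * \<bar>Wd (Suc a) (Suc a)\<bar>) * cmod (v $ a)"
    by (simp add: mult_ac)
  then have "cmod (mu - ?d) \<le> 2 * \<epsilon> * \<bar>Wd (Suc a) (Suc a)\<bar>"
    using vapos by simp
  then show ?thesis using a by (intro bexI[of _ "Suc a"]) auto
qed

definition Emat :: "nat \<Rightarrow> (nat \<Rightarrow> nat \<Rightarrow> real) \<Rightarrow> (nat \<Rightarrow> real) \<Rightarrow> int \<Rightarrow> real \<Rightarrow> complex \<Rightarrow> complex mat" where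
  "Emat N Wd \<alpha> k \<epsilon> z = mat N N (\<lambda>(a,b). (if a = b then z else 0)
      - dd k \<alpha> (Suc a) * of_real (W_eps Wd \<epsilon> (Suc a) (Suc b)))"

lemma charpoly_Emat:
  "poly (char_poly (Amat N (W_eps Wd \<epsilon>) \<alpha> k)) z = det (Emat N Wd \<alpha> k \<epsilon> z)"
proof -
  have "poly (char_poly (Amat N (W_eps Wd \<epsilon>) \<alpha> k)) z = det (- char_matrix (Amat N (W_eps Wd \<epsilon>) \<alpha> k) z)"
    by (rule char_poly_matrix[OF Amat_carrier])
  also have "- char_matrix (Amat N (W_eps Wd \<epsilon>) \<alpha> k) z = Emat N Wd \<alpha> k \<epsilon> z"
    by (rule eq_matI) (auto simp: char_matrix_def Amat_def Emat_def)
  finally show ?thesis .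
qed

lemma prod_shift1: "(\<Prod>j=1..N. f j) = (\<Prod>b<N. f (Suc b))"
  by (induct N) (auto simp: prod.atLeast1_atMost_eq)

lemma det_Emat_expand:
  "det (Emat N Wd \<alpha> k \<epsilon> z) = (\<Sum>p\<in>{p. p permutes {0..<N}}. signof p *
      (\<Prod>i=0..<N. (if i = p i then z else 0) - dd k \<alpha> (Suc i) * of_real (W_eps Wd \<epsilon> (Suc i) (Suc (p i)))))"
  unfolding det_def
proof -
  have "\<And>p i. p permutes {0..<N} \<Longrightarrow> i < N \<Longrightarrow> p i < N"
    by (metis atLeastLessThan_iff permutes_in_image zero_le)
  then show "(if dim_row (Emat N Wd \<alpha> k \<epsilon> z) = dim_col (Emat N Wd \<alpha> k \<epsilon> z)
     then \<Sum>p\<in>{p. p permutes {0..<dim_row (Emat N Wd \<alpha> k \<epsilon> z)}}.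
             signof p * (\<Prod>i = 0..<dim_row (Emat N Wd \<alpha> k \<epsilon> z). Emat N Wd \<alpha> k \<epsilon> z $$ (i, p i))
     else 0) = (\<Sum>p\<in>{p. p permutes {0..<N}}. signof p *
      (\<Prod>i=0..<N. (if i = p i then z else 0) - dd k \<alpha> (Suc i) * of_real (W_eps Wd \<epsilon> (Suc i) (Suc (p i)))))"
    by (auto simp: Emat_def intro!: sum.cong prod.cong)
qed

lemma det_Emat0: "det (Emat N Wd \<alpha> k 0 z) = (\<Prod>l=1..N. z - dd k \<alpha> l)"
proof -
  have ut: "upper_triangular (Emat N Wd \<alpha> k 0 z)"
    unfolding upper_triangular_def by (auto simp: Emat_def W_eps_def)
  have "det (Emat N Wd \<alpha> k 0 z) = prod_list (diag_mat (Emat N Wd \<alpha> k 0 z))"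
    by (rule det_upper_triangular[OF ut, of N]) (simp add: Emat_def)
  also have "\<dots> = (\<Prod>i<N. z - dd k \<alpha> (Suc i))"
    unfolding diag_mat_def by (simp add: Emat_def W_eps_def prod_list_upt o_def)
  also have "\<dots> = (\<Prod>l=1..N. z - dd k \<alpha> l)" by (simp only: prod_shift1)
  finally show ?thesis .
qed

lemma det_Emat_tendsto:
  "((\<lambda>\<epsilon>. det (Emat N Wd \<alpha> k \<epsilon> z)) \<longlongrightarrow> (\<Prod>l=1..N. z - dd k \<alpha> l)) (at_right 0)"
proof -
  let ?F = "\<lambda>\<epsilon>::real. (\<Sum>p\<in>{p. p permutes {0..<N}}. signof p *
      (\<Prod>i=0..<N. (if i = p i then z else 0) - dd k \<alpha> (Suc i) * of_real (W_eps Wd \<epsilon> (Suc i) (Suc (p i)))))"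
  have "isCont ?F 0" unfolding W_eps_def by (intro continuous_intros)
  then have "(?F \<longlongrightarrow> ?F 0) (at 0)" by (rule isContD)
  then have "(?F \<longlongrightarrow> ?F 0) (at_right 0)" by (rule tendsto_within_subset) auto
  moreover have "?F 0 = (\<Prod>l=1..N. z - dd k \<alpha> l)" using det_Emat0 det_Emat_expand by metis
  ultimately show ?thesis unfolding det_Emat_expand by simp
qed



lemma p0_lower:
  fixes d :: "nat \<Rightarrow> complex" and c :: complex
  assumes N1: "N \<ge> 1" and sep: "\<forall>l\<in>{1..N}. d l \<noteq> c \<longrightarrow> \<delta> \<le> cmod (d l - c)"
    and d1: "0 < \<delta>1" "\<delta>1 \<le> 1" "\<delta>1 \<le> \<delta> / 2" and t: "0 < t" "t \<le> \<delta> / 2"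
  shows "cmod (\<Prod>l=1..N. c + of_real t - d l) \<ge> t ^ card {l\<in>{1..N}. d l = c} * \<delta>1 ^ N"
proof -
  let ?B = "{1..N} \<inter> - {l. d l = c}"
  have "(\<Prod>l=1..N. (if d l = c then t else \<delta>1)) = t ^ card {l\<in>{1..N}. d l = c} * \<delta>1 ^ card ?B"
  proof -
    have "(\<Prod>l=1..N. (if d l = c then t else \<delta>1)) = (\<Prod>l\<in>{1..N} \<inter> {l. d l = c}. t) * (\<Prod>l\<in>?B. \<delta>1)"
      by (rule prod.If_cases) simp
    also have "{1..N} \<inter> {l. d l = c} = {l\<in>{1..N}. d l = c}" by auto
    finally show ?thesis by simp
  qed
  moreover have "\<delta>1 ^ N \<le> \<delta>1 ^ card ?B"
  proof (rule power_decreasing)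
    have "card ?B \<le> card {1..N}" by (rule card_mono) auto
    then show "card ?B \<le> N" by simp
  qed (use d1 in auto)
  moreover have "(\<Prod>l=1..N. (if d l = c then t else \<delta>1)) \<le> (\<Prod>l=1..N. cmod (c + of_real t - d l))"
  proof (rule prod_mono)
    fix l assume l: "l \<in> {1..N}"
    show "0 \<le> (if d l = c then t else \<delta>1) \<and> (if d l = c then t else \<delta>1) \<le> cmod (c + of_real t - d l)"
    proof (cases "d l = c")
      case True then show ?thesis using t by simp
    next
      case False
      then have "\<delta> \<le> cmod (d l - c)" using sep l by auto
      moreover have "cmod (d l - c) \<le> cmod (c + of_real t - d l) + t"
      proof -
        have "cmod (d l - c) = cmod (of_real t - (c + of_real t - d l))" by (simp add: algebra_simps)
        also have "\<dots> \<le> cmod (of_real t :: complex) + cmod (c + of_real t - d l)" by (rule norm_triangle_ineq4)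
        finally show ?thesis using t by simp
      qed
      ultimately show ?thesis using False d1 t by simp
    qed
  qed
  moreover have "cmod (\<Prod>l=1..N. c + of_real t - d l) = (\<Prod>l=1..N. cmod (c + of_real t - d l))"
    by (simp add: prod_norm)
  ultimately show ?thesis using t d1
    by (smt (verit, best) mult_left_mono zero_le_power)
qed

lemma p1_upper:
  fixes mu ch :: "nat \<Rightarrow> complex" and c :: complex
  assumes ch: "\<forall>i<N. cmod (ch i) = 1 \<and> cmod (mu i - ch i) \<le> r"
    and c: "cmod c = 1" and r: "0 \<le> r" "r \<le> t" and t: "t \<le> 1/2"
    and n0: "n0 \<le> card {i. i < N \<and> ch i = c}"
  shows "cmod (\<Prod>i<N. c + of_real t - mu i) \<le> (2 * t) ^ n0 * 3 ^ N"
proof -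
  let ?A = "{..<N} \<inter> {i. ch i = c}"
  let ?B = "{..<N} \<inter> - {i. ch i = c}"
  have t0: "0 \<le> t" using r by simp
  have "cmod (\<Prod>i<N. c + of_real t - mu i) = (\<Prod>i<N. cmod (c + of_real t - mu i))"
    by (simp add: prod_norm)
  also have "\<dots> \<le> (\<Prod>i<N. (if ch i = c then 2 * t else 3))"
  proof (rule prod_mono)
    fix i assume i: "i \<in> {..<N}"
    have mu: "cmod (mu i - ch i) \<le> r" "cmod (ch i) = 1" using ch i by auto
    show "0 \<le> cmod (c + of_real t - mu i) \<and> cmod (c + of_real t - mu i) \<le> (if ch i = c then 2 * t else 3)"
    proof (cases "ch i = c")
      case True
      have "cmod (c + of_real t - mu i) = cmod (of_real t - (mu i - ch i))" using True by (simp add: algebra_simps)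
      also have "\<dots> \<le> cmod (of_real t :: complex) + cmod (mu i - ch i)" by (rule norm_triangle_ineq4)
      finally show ?thesis using True mu r t0 by simp
    next
      case False
      have "cmod (c + of_real t - mu i) = cmod (c + of_real t - ch i - (mu i - ch i))" by (simp add: algebra_simps)
      also have "\<dots> \<le> cmod (c + of_real t - ch i) + cmod (mu i - ch i)" by (rule norm_triangle_ineq4)
      also have "cmod (c + of_real t - ch i) \<le> cmod (c + of_real t) + cmod (ch i)" by (rule norm_triangle_ineq4)
      also have "cmod (c + of_real t) \<le> cmod c + cmod (of_real t :: complex)" by (rule norm_triangle_ineq)
      finally show ?thesis using False mu r t t0 c by simp
    qed
  qed
  also have "(\<Prod>i<N. (if ch i = c then 2 * t else 3)) = (2 * t) ^ card ?A * 3 ^ card ?B"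
    by (subst prod.If_cases) simp_all
  also have "\<dots> \<le> (2 * t) ^ n0 * 3 ^ N"
  proof (rule mult_mono)
    have "card ?A = card {i. i < N \<and> ch i = c}" by (rule arg_cong[where f=card]) auto
    then show "(2 * t) ^ card ?A \<le> (2 * t) ^ n0" using n0 t t0 by (intro power_decreasing) auto
    have "card ?B \<le> card {..<N}" by (rule card_mono) auto
    then show "(3::real) ^ card ?B \<le> 3 ^ N" by (intro power_increasing) auto
  qed (use t0 in auto)
  finally show ?thesis .
qed

lemma count_le:
  fixes d mu ch :: "nat \<Rightarrow> complex" and c :: complex
  assumes N1: "N \<ge> 1" and dn: "\<forall>l\<in>{1..N}. cmod (d l) = 1" and c: "c \<in> d ` {1..N}"
    and sep: "\<forall>l\<in>{1..N}. d l \<noteq> c \<longrightarrow> \<delta> \<le> cmod (d l - c)"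
    and d1: "0 < \<delta>1" "\<delta>1 \<le> 1" "\<delta>1 \<le> \<delta> / 2"
    and tdef: "t = \<delta>1 ^ N / (2 ^ (N + 2) * 3 ^ N)"
    and r: "0 \<le> r" "r \<le> t"
    and ch: "\<forall>i<N. ch i \<in> d ` {1..N} \<and> cmod (mu i - ch i) \<le> r"
    and close: "cmod ((\<Prod>i<N. c + of_real t - mu i) - (\<Prod>l=1..N. c + of_real t - d l))
                  < cmod (\<Prod>l=1..N. c + of_real t - d l) / 2"
  shows "card {i. i < N \<and> ch i = c} \<le> card {l\<in>{1..N}. d l = c}"
proof (rule ccontr)
  let ?m = "card {l\<in>{1..N}. d l = c}"
  assume "\<not> card {i. i < N \<and> ch i = c} \<le> ?m"
  then have n0: "Suc ?m \<le> card {i. i < N \<and> ch i = c}" by simp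
  have mN: "?m \<le> N"
  proof -
    have "?m \<le> card {1..N}" by (rule card_mono) auto
    then show ?thesis by simp
  qed
  have dN: "\<delta>1 ^ N \<le> \<delta>1" using d1 N1 power_decreasing[of 1 N \<delta>1] by simp
  have den: "(4::real) \<le> 2 ^ (N + 2) * 3 ^ N"
  proof -
    have "(4::real) = 2 ^ 2 * 1" by simp
    also have "\<dots> \<le> 2 ^ (N + 2) * 3 ^ N"
      by (intro mult_mono power_increasing) (auto simp: one_le_power)
    finally show ?thesis .
  qed
  have t0: "0 < t" unfolding tdef using d1 by simp
  have t4: "t \<le> \<delta>1 ^ N / 4" unfolding tdef using d1 den
    by (intro divide_left_mono) auto
  have th: "t \<le> 1/2" using t4 dN d1 by simp
  have td: "t \<le> \<delta> / 2" using t4 dN d1 by simp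
  have cn: "cmod c = 1" using c dn by auto
  have chn: "\<forall>i<N. cmod (ch i) = 1 \<and> cmod (mu i - ch i) \<le> r" using ch dn by auto
  have low: "cmod (\<Prod>l=1..N. c + of_real t - d l) \<ge> t ^ ?m * \<delta>1 ^ N"
    by (rule p0_lower[OF N1 sep d1 t0 td])
  have up: "cmod (\<Prod>i<N. c + of_real t - mu i) \<le> (2 * t) ^ Suc ?m * 3 ^ N"
    by (rule p1_upper[OF chn cn r th n0])
  have "(2 * t) ^ Suc ?m * 3 ^ N = t ^ ?m * (2 ^ Suc ?m * t * 3 ^ N)"
    by (simp add: power_mult_distrib mult_ac)
  also have "\<dots> \<le> t ^ ?m * (2 ^ (N + 1) * t * 3 ^ N)"
    using t0 mN by (intro mult_left_mono mult_right_mono power_increasing) auto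
  also have "2 ^ (N + 1) * t * 3 ^ N = \<delta>1 ^ N / 2"
    unfolding tdef by (simp add: field_simps power_add)
  finally have "cmod (\<Prod>i<N. c + of_real t - mu i) \<le> t ^ ?m * \<delta>1 ^ N / 2" using up by simp
  then have "cmod (\<Prod>i<N. c + of_real t - mu i) \<le> cmod (\<Prod>l=1..N. c + of_real t - d l) / 2"
    using low by simp
  moreover have "cmod (\<Prod>l=1..N. c + of_real t - d l) \<le> cmod (\<Prod>i<N. c + of_real t - mu i)
      + cmod ((\<Prod>i<N. c + of_real t - mu i) - (\<Prod>l=1..N. c + of_real t - d l))"
    using norm_triangle_ineq2[of "\<Prod>l=1..N. c + of_real t - d l" "\<Prod>i<N. c + of_real t - mu i"]
      norm_minus_commute[of "\<Prod>l=1..N. c + of_real t - d l" "\<Prod>i<N. c + of_real t - mu i"]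
    by linarith
  ultimately show False using close by simp
qed



lemma matching:
  fixes d ch :: "nat \<Rightarrow> complex"
  assumes chm: "\<forall>i<N. ch i \<in> d ` {1..N}"
    and cnt: "\<forall>c\<in>d ` {1..N}. card {i. i < N \<and> ch i = c} \<le> card {l\<in>{1..N}. d l = c}"
  shows "\<exists>g. bij_betw g {1..N} {0..<N} \<and> (\<forall>l\<in>{1..N}. ch (g l) = d l)"
proof -
  define C where "C = d ` {1..N}"
  define I where "I c = {i. i < N \<and> ch i = c}" for c
  define L where "L c = {l\<in>{1..N}. d l = c}" for c
  have fC: "finite C" unfolding C_def by simp
  have fI: "finite (I c)" for c unfolding I_def by simp
  have fL: "finite (L c)" for c unfolding L_def by simp
  have UI: "{0..<N} = (\<Union>c\<in>C. I c)" using chm unfolding I_def C_def by (auto simp del: One_nat_def) blast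
  have UL: "{1..N} = (\<Union>c\<in>C. L c)" unfolding L_def C_def by auto
  have sI: "(\<Sum>c\<in>C. card (I c)) = N"
  proof -
    have "card (\<Union>c\<in>C. I c) = (\<Sum>c\<in>C. card (I c))"
      by (rule card_UN_disjoint) (use fC fI in \<open>auto simp: I_def\<close>)
    then show ?thesis using UI[symmetric] by simp
  qed
  have sL: "(\<Sum>c\<in>C. card (L c)) = N"
  proof -
    have "card (\<Union>c\<in>C. L c) = (\<Sum>c\<in>C. card (L c))"
      by (rule card_UN_disjoint) (use fC fL in \<open>auto simp: L_def\<close>)
    then show ?thesis using UL[symmetric] by simp
  qed
  have eqc: "card (L c) = card (I c)" if c: "c \<in> C" for c
  proof -
    have "card (I c) = card (L c)"
      by (rule sum_mono_inv[of "\<lambda>c. card (I c)" C "\<lambda>c. card (L c)" c])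
        (use sI sL cnt c fC in \<open>auto simp: I_def L_def C_def\<close>)
    then show ?thesis by simp
  qed
  define G where "G c = (SOME h. bij_betw h (L c) (I c))" for c
  have Gb: "bij_betw (G c) (L c) (I c)" if "c \<in> C" for c
    unfolding G_def by (rule someI_ex[OF finite_same_card_bij[OF fL fI eqc[OF that]]])
  define g where "g l = G (d l) l" for l
  have gI: "g l \<in> I (d l)" if l: "l \<in> {1..N}" for l
  proof -
    have "d l \<in> C" using l unfolding C_def by simp
    moreover have "l \<in> L (d l)" using l unfolding L_def by simp
    ultimately show ?thesis unfolding g_def using Gb bij_betw_apply by fastforce
  qed
  have gprop: "\<forall>l\<in>{1..N}. ch (g l) = d l" using gI unfolding I_def by auto
  have inj: "inj_on g {1..N}"
  proof (rule inj_onI)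
    fix l l' assume l: "l \<in> {1..N}" and l': "l' \<in> {1..N}" and e: "g l = g l'"
    have "d l = d l'" using gprop l l' e by metis
    moreover have "d l \<in> C" using l unfolding C_def by simp
    moreover have "l \<in> L (d l)" "l' \<in> L (d l)" using l l' \<open>d l = d l'\<close> unfolding L_def by auto
    ultimately show "l = l'" using Gb[of "d l"] e unfolding g_def bij_betw_def inj_on_def by metis
  qed
  have img: "g ` {1..N} = {0..<N}"
  proof
    show "g ` {1..N} \<subseteq> {0..<N}" using gI unfolding I_def by auto
    show "{0..<N} \<subseteq> g ` {1..N}"
    proof
      fix i assume i: "i \<in> {0..<N}"
      define c where "c = ch i"
      have cC: "c \<in> C" using chm i unfolding c_def C_def by auto
      have "i \<in> I c" using i unfolding I_def c_def by auto
      then obtain l where l: "l \<in> L c" "G c l = i" using Gb[OF cC] unfolding bij_betw_def by (metis imageE)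
      then have "l \<in> {1..N}" "d l = c" unfolding L_def by auto
      then show "i \<in> g ` {1..N}" using l unfolding g_def by auto
    qed
  qed
  show ?thesis using inj img gprop unfolding bij_betw_def by blast
qed



lemma bij_minus1: fixes N :: nat shows "bij_betw (\<lambda>l. l - 1) {1..N} {0..<N}"
  unfolding bij_betw_def
proof
  show "inj_on (\<lambda>l. l - 1) {1..N}" 
  proof (rule inj_onI)
    fix x y :: nat assume "x \<in> {1..N}" "y \<in> {1..N}" "x - 1 = y - 1"
    then show "x = y" by auto
  qed
  have "{0..<N} \<subseteq> (\<lambda>l. l - 1) ` {1..N}"
  proof
    fix x assume "x \<in> {0..<N}"
    then show "x \<in> (\<lambda>l. l - 1) ` {1..N}" by (intro rev_image_eqI[of "Suc x"]) auto
  qed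
  moreover have "(\<lambda>l. l - 1) ` {1..N} \<subseteq> {0..<N}" by auto
  ultimately show "(\<lambda>l. l - 1) ` {1..N} = {0..<N}" by blast
qed

lemma t_props:
  fixes \<delta>1 t :: real
  assumes N1: "N \<ge> 1" and d1: "0 < \<delta>1" "\<delta>1 \<le> 1" and tdef: "t = \<delta>1 ^ N / (2 ^ (N + 2) * 3 ^ N)"
  shows "0 < t" "t \<le> \<delta>1"
proof -
  have dN: "\<delta>1 ^ N \<le> \<delta>1" using d1 N1 power_decreasing[of 1 N \<delta>1] by simp
  have h1: "(1::real) \<le> 2 ^ (N + 2)" by (rule one_le_power) simp
  have h2: "(1::real) \<le> 3 ^ N" by (rule one_le_power) simp
  have den: "(1::real) \<le> 2 ^ (N + 2) * 3 ^ N" using mult_mono[OF h1 h2] by simp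
  show "0 < t" unfolding tdef using d1 by simp
  have "t \<le> \<delta>1 ^ N / 1" unfolding tdef
    by (rule divide_left_mono) (use d1 den in auto)
  then have "t \<le> \<delta>1 ^ N" by simp
  then show "t \<le> \<delta>1" using dN by simp
qed

theorem proposition2p2:
  fixes N :: nat and \<alpha> :: "nat \<Rightarrow> real" and Wd :: "nat \<Rightarrow> nat \<Rightarrow> real" and k :: int
  assumes "N \<ge> 1"
    and "\<forall>i\<in>{1..N}. \<forall>j\<in>{1..N}. Wd i j = Wd j i"
    and "\<forall>i\<in>{1..N}. \<forall>j\<in>{1..N}. i \<noteq> j \<longrightarrow> Wd i j \<ge> 0"
    and "\<forall>i\<in>{1..N}. (\<Sum>j=1..N. Wd i j) = 0"
  shows "(\<forall>\<epsilon>>0. \<exists>lam f. sep_eigen_system N (W_eps Wd \<epsilon>) \<alpha> k lam f)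
       \<and> (\<exists>\<epsilon>0>0. \<forall>\<epsilon>. 0 < \<epsilon> \<and> \<epsilon> < \<epsilon>0 \<longrightarrow>
            (\<exists>lam f. sep_eigen_system N (W_eps Wd \<epsilon>) \<alpha> k lam f \<and>
               (\<forall>l\<in>{1..N}. cmod (lam l - exp (- 2 * of_real pi * \<i> * of_int k * of_real (\<alpha> l)))
                   \<le> 2 * Max ((\<lambda>m. \<bar>Wd m m\<bar>) ` {1..N}) * \<epsilon>)))"
proof -
  have N1: "N \<ge> 1" and off: "\<forall>i\<in>{1..N}. \<forall>j\<in>{1..N}. i \<noteq> j \<longrightarrow> Wd i j \<ge> 0"
    and rs: "\<forall>i\<in>{1..N}. (\<Sum>j=1..N. Wd i j) = 0" using assms by auto
  define M where "M = Max ((\<lambda>m. \<bar>Wd m m\<bar>) ` {1..N})"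
  have Mge: "\<forall>l\<in>{1..N}. \<bar>Wd l l\<bar> \<le> M" unfolding M_def by auto
  have "\<bar>Wd N N\<bar> \<le> M" using Mge N1 by auto
  then have M0: "M \<ge> 0" by (rule order_trans[OF abs_ge_zero])
  have P1: "\<forall>\<epsilon>>0. \<exists>lam f. sep_eigen_system N (W_eps Wd \<epsilon>) \<alpha> k lam f"
  proof (intro allI impI)
    fix \<epsilon> :: real assume "\<epsilon> > 0"
    obtain P Q mu where P: "P \<in> carrier_mat N N" and Q: "Q \<in> carrier_mat N N" and QP: "Q * P = 1\<^sub>m N"
      and gen: "\<forall>i<N. ((\<lambda>v. (Amat N (W_eps Wd \<epsilon>) \<alpha> k - mu i \<cdot>\<^sub>m 1\<^sub>m N) *\<^sub>v v) ^^ N) (col P i) = 0\<^sub>v N"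
      using jordan_data[OF Amat_carrier[of N "W_eps Wd \<epsilon>" \<alpha> k]] by blast
    show "\<exists>lam f. sep_eigen_system N (W_eps Wd \<epsilon>) \<alpha> k lam f"
      using eigen_system[OF N1 P Q QP gen bij_minus1] by blast
  qed
  define d where "d = dd k \<alpha>"
  define C where "C = d ` {1..N}"
  have fC: "finite C" unfolding C_def by simp
  define D where "D = (\<lambda>(a,b). cmod (a - b)) ` {(a,b). a \<in> C \<and> b \<in> C \<and> a \<noteq> b} \<union> {1}"
  define \<delta> where "\<delta> = Min D"
  have fD: "finite D"
  proof -
    have "{(a,b). a \<in> C \<and> b \<in> C \<and> a \<noteq> b} \<subseteq> C \<times> C" by auto
    then have "finite {(a,b). a \<in> C \<and> b \<in> C \<and> a \<noteq> b}" using fC finite_subset by blast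
    then show ?thesis unfolding D_def by simp
  qed
  have \<delta>0: "\<delta> > 0" unfolding \<delta>_def using fD by (subst Min_gr_iff) (auto simp: D_def)
  have sep: "\<forall>l\<in>{1..N}. d l \<noteq> c \<longrightarrow> \<delta> \<le> cmod (d l - c)" if c: "c \<in> C" for c
  proof (intro ballI impI)
    fix l assume l: "l \<in> {1..N}" and ne: "d l \<noteq> c"
    have "cmod (d l - c) \<in> D" unfolding D_def using l ne c C_def by auto
    then show "\<delta> \<le> cmod (d l - c)" unfolding \<delta>_def using fD by simp
  qed
  define \<delta>1 where "\<delta>1 = min (\<delta> / 2) 1"
  have d1: "0 < \<delta>1" "\<delta>1 \<le> 1" "\<delta>1 \<le> \<delta> / 2" unfolding \<delta>1_def using \<delta>0 by auto
  define t where "t = \<delta>1 ^ N / (2 ^ (N + 2) * 3 ^ N)"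
  have t0: "0 < t" and t1: "t \<le> \<delta>1" using t_props[OF N1 d1(1,2) t_def] by auto
  define p0 where "p0 c = (\<Prod>l=1..N. c + of_real t - d l)" for c
  have p0pos: "cmod (p0 c) > 0" if c: "c \<in> C" for c
  proof -
    have "cmod (p0 c) \<ge> t ^ card {l\<in>{1..N}. d l = c} * \<delta>1 ^ N"
      unfolding p0_def using p0_lower[OF N1 sep[OF c] d1 t0] t1 d1 by simp
    moreover have "t ^ card {l\<in>{1..N}. d l = c} * \<delta>1 ^ N > 0" using t0 d1 by simp
    ultimately show ?thesis by linarith
  qed
  have ev1: "eventually (\<lambda>\<epsilon>. 2 * \<epsilon> * M < t) (at_right (0::real))"
  proof -
    have "((\<lambda>\<epsilon>::real. 2 * \<epsilon> * M) \<longlongrightarrow> 2 * 0 * M) (at_right 0)" by (intro tendsto_intros)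
    then show ?thesis using t0 by (intro order_tendstoD(2)) auto
  qed
  have ev2: "eventually (\<lambda>\<epsilon>. \<forall>c\<in>C. cmod (det (Emat N Wd \<alpha> k \<epsilon> (c + of_real t)) - p0 c) < cmod (p0 c) / 2)
      (at_right (0::real))"
  proof (rule eventually_ball_finite[OF fC], intro ballI)
    fix c assume c: "c \<in> C"
    have "((\<lambda>\<epsilon>. det (Emat N Wd \<alpha> k \<epsilon> (c + of_real t))) \<longlongrightarrow> p0 c) (at_right 0)"
      using det_Emat_tendsto[of N Wd \<alpha> k "c + of_real t"] unfolding p0_def d_def by simp
    then have H: "\<And>e. e > 0 \<Longrightarrow> eventually (\<lambda>x. cmod (det (Emat N Wd \<alpha> k x (c + of_real t)) - p0 c) < e) (at_right 0)"
      unfolding tendsto_iff dist_norm by blast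
    show "eventually (\<lambda>\<epsilon>. cmod (det (Emat N Wd \<alpha> k \<epsilon> (c + of_real t)) - p0 c) < cmod (p0 c) / 2) (at_right 0)"
      by (rule H) (use p0pos[OF c] in simp)
  qed
  obtain \<epsilon>0 where e0: "\<epsilon>0 > 0" and good: "\<And>\<epsilon>. 0 < \<epsilon> \<Longrightarrow> \<epsilon> < \<epsilon>0 \<Longrightarrow> 2 * \<epsilon> * M < t \<and>
      (\<forall>c\<in>C. cmod (det (Emat N Wd \<alpha> k \<epsilon> (c + of_real t)) - p0 c) < cmod (p0 c) / 2)"
    using eventually_conj[OF ev1 ev2] unfolding eventually_at_right_field by auto
  have P2: "\<forall>\<epsilon>. 0 < \<epsilon> \<and> \<epsilon> < \<epsilon>0 \<longrightarrow>
            (\<exists>lam f. sep_eigen_system N (W_eps Wd \<epsilon>) \<alpha> k lam f \<and>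
               (\<forall>l\<in>{1..N}. cmod (lam l - exp (- 2 * of_real pi * \<i> * of_int k * of_real (\<alpha> l)))
                   \<le> 2 * Max ((\<lambda>m. \<bar>Wd m m\<bar>) ` {1..N}) * \<epsilon>))"
  proof (intro allI impI)
    fix \<epsilon> :: real assume e: "0 < \<epsilon> \<and> \<epsilon> < \<epsilon>0"
    have g1: "2 * \<epsilon> * M < t" and
      g2: "\<forall>c\<in>C. cmod (det (Emat N Wd \<alpha> k \<epsilon> (c + of_real t)) - p0 c) < cmod (p0 c) / 2"
      using good e by auto
    let ?A = "Amat N (W_eps Wd \<epsilon>) \<alpha> k"
    obtain P Q mu where P: "P \<in> carrier_mat N N" and Q: "Q \<in> carrier_mat N N" and QP: "Q * P = 1\<^sub>m N"
      and gen: "\<forall>i<N. ((\<lambda>v. (?A - mu i \<cdot>\<^sub>m 1\<^sub>m N) *\<^sub>v v) ^^ N) (col P i) = 0\<^sub>v N"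
      and cp: "\<forall>z. poly (char_poly ?A) z = (\<Prod>i<N. z - mu i)"
      using jordan_data[OF Amat_carrier[of N "W_eps Wd \<epsilon>" \<alpha> k]] by blast
    let ?r = "2 * \<epsilon> * M"
    have r0: "0 \<le> ?r" using e M0 by simp
    have gs: "\<exists>l. l \<in> {1..N} \<and> cmod (mu i - d l) \<le> ?r" if i: "i < N" for i
    proof -
      have "poly (char_poly ?A) (mu i) = 0" using cp i by (auto intro: prod_zero)
      then have "eigenvalue ?A (mu i)" using eigenvalue_root_char_poly[OF Amat_carrier] by blast
      then have "\<exists>l\<in>{1..N}. cmod (mu i - dd k \<alpha> l) \<le> 2 * \<epsilon> * \<bar>Wd l l\<bar>"
        by (intro gersh[OF off rs]) (use e in auto)
      then obtain l where l: "l \<in> {1..N}" "cmod (mu i - dd k \<alpha> l) \<le> 2 * \<epsilon> * \<bar>Wd l l\<bar>"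
        by blast
      have "2 * \<epsilon> * \<bar>Wd l l\<bar> \<le> ?r" using Mge l e by auto
      then show ?thesis using l unfolding d_def by auto
    qed
    define ch where "ch i = d (SOME l. l \<in> {1..N} \<and> cmod (mu i - d l) \<le> ?r)" for i
    have chp: "\<forall>i<N. ch i \<in> d ` {1..N} \<and> cmod (mu i - ch i) \<le> ?r"
    proof (intro allI impI)
      fix i assume "i < N"
      from someI_ex[OF gs[OF this]]
      show "ch i \<in> d ` {1..N} \<and> cmod (mu i - ch i) \<le> ?r" unfolding ch_def by auto
    qed
    have dn: "\<forall>l\<in>{1..N}. cmod (d l) = 1" unfolding d_def by (simp add: norm_dd)
    have cnt: "\<forall>c\<in>d ` {1..N}. card {i. i < N \<and> ch i = c} \<le> card {l\<in>{1..N}. d l = c}"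
    proof
      fix c assume c: "c \<in> d ` {1..N}"
      then have cC: "c \<in> C" unfolding C_def .
      have "(\<Prod>i<N. c + of_real t - mu i) = det (Emat N Wd \<alpha> k \<epsilon> (c + of_real t))"
        using cp[rule_format, of "c + of_real t"] charpoly_Emat[of N Wd \<epsilon> \<alpha> k "c + of_real t"] by simp
      then have close: "cmod ((\<Prod>i<N. c + of_real t - mu i) - (\<Prod>l=1..N. c + of_real t - d l))
                  < cmod (\<Prod>l=1..N. c + of_real t - d l) / 2"
        using g2 cC unfolding p0_def by auto
      show "card {i. i < N \<and> ch i = c} \<le> card {l\<in>{1..N}. d l = c}"
        by (rule count_le[OF N1 dn c sep[OF cC] d1 t_def r0 _ chp close]) (use g1 in simp)
    qed
    obtain g where g: "bij_betw g {1..N} {0..<N}" and gch: "\<forall>l\<in>{1..N}. ch (g l) = d l"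
      using matching[OF _ cnt] chp by blast
    show "\<exists>lam f. sep_eigen_system N (W_eps Wd \<epsilon>) \<alpha> k lam f \<and>
               (\<forall>l\<in>{1..N}. cmod (lam l - exp (- 2 * of_real pi * \<i> * of_int k * of_real (\<alpha> l)))
                   \<le> 2 * Max ((\<lambda>m. \<bar>Wd m m\<bar>) ` {1..N}) * \<epsilon>)"
    proof (intro exI conjI)
      show "sep_eigen_system N (W_eps Wd \<epsilon>) \<alpha> k (\<lambda>l. mu (g l)) (\<lambda>l. fun_of (col P (g l)))"
        by (rule eigen_system[OF N1 P Q QP gen g])
      show "\<forall>l\<in>{1..N}. cmod (mu (g l) - exp (- 2 * of_real pi * \<i> * of_int k * of_real (\<alpha> l)))
                   \<le> 2 * Max ((\<lambda>m. \<bar>Wd m m\<bar>) ` {1..N}) * \<epsilon>"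
      proof
        fix l assume l: "l \<in> {1..N}"
        have gl: "g l < N" using g l unfolding bij_betw_def by auto
        have "cmod (mu (g l) - ch (g l)) \<le> ?r" using chp gl by blast
        then have "cmod (mu (g l) - d l) \<le> ?r" using gch l by simp
        then show "cmod (mu (g l) - exp (- 2 * of_real pi * \<i> * of_int k * of_real (\<alpha> l)))
                   \<le> 2 * Max ((\<lambda>m. \<bar>Wd m m\<bar>) ` {1..N}) * \<epsilon>"
          unfolding d_def dd_def M_def by (simp add: mult_ac)
      qed
    qed
  qed
  show ?thesis using P1 P2 e0 by blast
qed

end
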